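(* The matrix $\Gamma^{\mathrm{OB}}$ is $(m+1,1/m)$-admissible and implementable with complexity $m$ (with respect to learner actions $\mathcal B_m$, adversary actions = threshold vectors $\vec p\in[0,1]^k$, and payoff $u(\vec b,\vec p)$).
   Context: Online bidding in simultaneous second-price auctions with $k$ items: a bidder has valuation $v:\{0,1\}^k\to\{0,1/m,\dots,m/m\}$ with $v(\vec 0)=0$. Against a threshold vector $\vec p\in[0,1]^k$ (the highest competing bids), a bid vector $\vec b$ wins the bundle $\vec q(\vec b,\vec p)$ with $q_j=\mathbf 1(b_j>p_j)$ and has utility $u(\vec b,\vec p)=v(\vec q(\vec b,\vec p))-\vec p\cdot\vec q(\vec b,\vec p)$. $\mathcal B_m$ is the set of bid vectors $\vec b\in\{0,1/m,\dots,1\}^k$ satisfying no-overbidding: $\vec b\cdot\vec q\le v(\vec q)$ for all $\vec q\in\{0,1\}^k$. $\Gamma^{\mathrm{OB}}$ is the $|\mathcal B_m|\times k$ matrix with row $\Gamma^{\mathrm{OB}}_{\vec b}=\vec b$. A matrix $\Gamma$ is $(\kappa,\delta)$-admissible if its rows are distinct, each column has at most $\kappa$ distinct values, and distinct values within a column differ by at least $\delta$; it is implementable with complexity $M$ if for each column $j$ there is a finite set $S_j$ of pairs $(w,\vec p)$ with $w\ge0$, $|S_j|\le M$, and $\Gamma_{\vec b j}-\Gamma_{\vec b'j}=\sum_{(w,\vec p)\in S_j}w(u(\vec b,\vec p)-u(\vec b',\vec p))$ for all $\vec b,\vec b'\in\mathcal B_m$. *)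

theory Defs
  imports Main "HOL-Library.Countable_Set" Complex_Main
begin

text \<open>Items are indexed by a finite type 'k (so k = CARD('k)).
  A bundle q in {0,1}^k is represented by the set of items with q_j = 1.\<close>

definition grid :: "nat \<Rightarrow> real set" where
  "grid m = {real i / real m | i. i \<le> m}"

definition valuation :: "nat \<Rightarrow> ('k set \<Rightarrow> real) \<Rightarrow> bool" where
  "valuation m v \<longleftrightarrow> v {} = 0 \<and> (\<forall>q. v q \<in> grid m)"

definition won :: "('k \<Rightarrow> real) \<Rightarrow> ('k \<Rightarrow> real) \<Rightarrow> 'k set" where
  "won b p = {j. b j > p j}"

definition util :: "('k::finite set \<Rightarrow> real) \<Rightarrow> ('k \<Rightarrow> real) \<Rightarrow> ('k \<Rightarrow> real) \<Rightarrow> real" where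
  "util v b p = v (won b p) - (\<Sum>j\<in>won b p. p j)"

definition bids :: "nat \<Rightarrow> ('k::finite set \<Rightarrow> real) \<Rightarrow> ('k \<Rightarrow> real) set" where
  "bids m v = {b. (\<forall>j. b j \<in> grid m) \<and> (\<forall>q. (\<Sum>j\<in>q. b j) \<le> v q)}"

definition thresholds :: "('k \<Rightarrow> real) set" where
  "thresholds = {p. \<forall>j. 0 \<le> p j \<and> p j \<le> 1}"

definition gammaOB :: "('k \<Rightarrow> real) \<Rightarrow> 'k \<Rightarrow> real" where
  "gammaOB b j = b j"

definition admissible :: "'r set \<Rightarrow> ('r \<Rightarrow> 'c \<Rightarrow> real) \<Rightarrow> nat \<Rightarrow> real \<Rightarrow> bool" where
  "admissible R \<Gamma> \<kappa> \<delta> \<longleftrightarrow>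
     inj_on \<Gamma> R \<and>
     (\<forall>j. finite ((\<lambda>r. \<Gamma> r j) ` R) \<and> card ((\<lambda>r. \<Gamma> r j) ` R) \<le> \<kappa> \<and>
          (\<forall>x\<in>(\<lambda>r. \<Gamma> r j) ` R. \<forall>y\<in>(\<lambda>r. \<Gamma> r j) ` R. x \<noteq> y \<longrightarrow> \<bar>x - y\<bar> \<ge> \<delta>))"

definition implementable ::
  "'r set \<Rightarrow> 'a set \<Rightarrow> ('r \<Rightarrow> 'a \<Rightarrow> real) \<Rightarrow> ('r \<Rightarrow> 'c \<Rightarrow> real) \<Rightarrow> nat \<Rightarrow> bool" where
  "implementable R P U \<Gamma> M \<longleftrightarrow>
     (\<forall>j. \<exists>S :: (real \<times> 'a) set. finite S \<and> card S \<le> M \<and>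
          (\<forall>(w,p)\<in>S. w \<ge> 0 \<and> p \<in> P) \<and>
          (\<forall>b\<in>R. \<forall>b'\<in>R. \<Gamma> b j - \<Gamma> b' j = (\<Sum>(w,p)\<in>S. w * (U b p - U b' p))))"

end

theory Submission
  imports Defs
begin

lemma grid_img: "grid m = (\<lambda>i. real i / real m) ` {..m}"
  unfolding grid_def by auto

lemma grid_fin: "finite (grid m)"
  unfolding grid_img by simp

lemma grid_card: "card (grid m) \<le> m + 1"
  unfolding grid_img using card_image_le[of "{..m}" "\<lambda>i. real i / real m"] by simp

lemma grid_sep:
  assumes "m \<ge> 1" "x \<in> grid m" "y \<in> grid m" "x \<noteq> y"
  shows "\<bar>x - y\<bar> \<ge> 1 / real m"
proof -
  obtain i k where i: "x = real i / m" and k: "y = real k / m"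
    using assms(2,3) unfolding grid_def by auto
  have "i \<noteq> k" using assms(4) i k by auto
  hence "\<bar>real i - real k\<bar> \<ge> 1" by linarith
  moreover have "x - y = (real i - real k) / m" using i k by (simp add: diff_divide_distrib)
  hence "\<bar>x - y\<bar> = \<bar>real i - real k\<bar> / real m" by (simp add: abs_divide)
  moreover have "1 / real m \<le> \<bar>real i - real k\<bar> / real m"
    by (rule divide_right_mono) (use \<open>\<bar>real i - real k\<bar> \<ge> 1\<close> in auto)
  ultimately show ?thesis by simp
qed

lemma bid_le:
  assumes "b \<in> bids m v" shows "b j \<le> v {j}"
proof -
  have "(\<Sum>j\<in>{j}. b j) \<le> v {j}" using assms unfolding bids_def by blast
  thus ?thesis by simp
qed

lemma bid_le1:
  assumes "b \<in> bids m v" shows "b l \<le> 1" and "\<exists>k\<le>m. b l = real k / m"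
proof -
  have "b l \<in> grid m" using assms unfolding bids_def by auto
  then obtain k where "k \<le> m" "b l = real k / m" unfolding grid_def by auto
  thus "\<exists>k\<le>m. b l = real k / m" by auto
  show "b l \<le> 1" using \<open>k \<le> m\<close> \<open>b l = real k / m\<close>
  proof (cases "m = 0")
    case False
    then have "real k \<le> real m" "real m > 0" using \<open>k \<le> m\<close> by auto
    then show ?thesis using \<open>b l = real k / m\<close> by simp
  qed (use \<open>b l = real k / m\<close> in simp)
qed

lemma count_sum:
  assumes "m \<ge> 1" "k \<le> m"
  shows "(\<Sum>i\<in>{1..m}. if real k / m > (real i - 1/2) / m then 1 / real m else 0) = real k / m"
proof -
  have "(real k / m > (real i - 1/2) / m) \<longleftrightarrow> i \<le> k" for i
  proof -
    have mp: "real m > 0" using assms(1) by simp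
    have "(real k / m > (real i - 1/2) / m) \<longleftrightarrow> real i - 1/2 < real k"
      using mp by (simp add: divide_less_cancel)
    also have "\<dots> \<longleftrightarrow> i \<le> k"
    proof (cases "i \<le> k")
      case True then show ?thesis by simp
    next
      case False hence "real k + 1 \<le> real i" by simp
      then show ?thesis using False by simp
    qed
    finally show ?thesis .
  qed
  hence "(\<Sum>i\<in>{1..m}. if real k / m > (real i - 1/2) / m then 1 / real m else 0)
     = (\<Sum>i\<in>{1..m}. if i \<le> k then 1 / real m else 0)" by simp
  also have "\<dots> = (\<Sum>i\<in>{1..k}. 1 / real m)"
    by (rule sum.mono_neutral_cong_right) (use assms in auto)
  finally show ?thesis by simp
qed

theorem lemma6p2:
  fixes m :: nat and v :: "'k::finite set \<Rightarrow> real"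
  assumes "m \<ge> 1" and "valuation m v"
  shows "admissible (bids m v) gammaOB (m + 1) (1 / real m)
       \<and> implementable (bids m v) thresholds (util v) gammaOB m"
proof
  have img: "(\<lambda>r. gammaOB r j) ` bids m v \<subseteq> grid m" for j
    unfolding gammaOB_def bids_def by auto
  have inj: "inj_on gammaOB (bids m v)"
    by (rule inj_onI) (auto simp: gammaOB_def fun_eq_iff)
  show "admissible (bids m v) gammaOB (m + 1) (1 / real m)"
    unfolding admissible_def
  proof (intro conjI allI inj)
    fix j
    show "finite ((\<lambda>r. gammaOB r j) ` bids m v)" using img grid_fin finite_subset by blast
    show "card ((\<lambda>r. gammaOB r j) ` bids m v) \<le> m + 1"
      using card_mono[OF grid_fin img] grid_card order_trans by blast
    show "\<forall>x\<in>(\<lambda>r. gammaOB r j) ` bids m v. \<forall>y\<in>(\<lambda>r. gammaOB r j) ` bids m v.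
            x \<noteq> y \<longrightarrow> 1 / real m \<le> \<bar>x - y\<bar>"
      using img grid_sep[OF assms(1)] by blast
  qed
  show "implementable (bids m v) thresholds (util v) gammaOB m"
    unfolding implementable_def
  proof
    fix j :: 'k
    define P :: "nat \<Rightarrow> 'k \<Rightarrow> real" where
      "P i = (\<lambda>l. if l = j then (real i - 1/2) / m else 1)" for i
    define w :: "nat \<Rightarrow> real" where
      "w i = (if v {j} > (real i - 1/2) / m then 1 / (m * (v {j} - (real i - 1/2) / m)) else 0)" for i
    define S where "S = (\<lambda>i. (w i, P i)) ` {1..m}"
    have injP: "inj_on (\<lambda>i. (w i, P i)) {1..m}"
    proof (rule inj_onI)
      fix x y assume "(w x, P x) = (w y, P y)"
      hence "P x j = P y j" by simp
      hence "(real x - 1/2) / m = (real y - 1/2) / m" unfolding P_def by simp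
      thus "x = y" using assms(1) by simp
    qed
    have key: "(\<Sum>i\<in>{1..m}. w i * util v b (P i)) = b j" if b: "b \<in> bids m v" for b
    proof -
      obtain k where k: "k \<le> m" "b j = real k / m" using bid_le1(2)[OF b] by blast
      have won: "won b (P i) = (if b j > (real i - 1/2) / m then {j} else {})" for i
        using bid_le1(1)[OF b] unfolding won_def P_def by (auto simp: not_less) (meson bid_le1(1)[OF b] not_le)
      have v0: "v {} = 0" using assms(2) unfolding valuation_def by auto
      have trm: "w i * util v b (P i) = (if b j > (real i - 1/2) / m then 1 / real m else 0)" for i
      proof (cases "b j > (real i - 1/2) / m")
        case True
        hence "v {j} > (real i - 1/2) / m" using bid_le[OF b, of j] by linarith
        have "util v b (P i) = v {j} - (real i - 1/2) / m"
          unfolding util_def won using True by (simp add: P_def)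
        then show ?thesis using True assms(1) \<open>v {j} > _\<close>
          by (simp add: w_def)
      next
        case False
        then show ?thesis by (simp add: util_def won v0)
      qed
      show ?thesis unfolding trm k(2) using count_sum[OF assms(1) k(1)] by simp
    qed
    show "\<exists>S :: (real \<times> ('k \<Rightarrow> real)) set. finite S \<and> card S \<le> m \<and>
          (\<forall>(w,p)\<in>S. w \<ge> 0 \<and> p \<in> thresholds) \<and>
          (\<forall>b\<in>bids m v. \<forall>b'\<in>bids m v. gammaOB b j - gammaOB b' j
              = (\<Sum>(w,p)\<in>S. w * (util v b p - util v b' p)))"
    proof (intro exI[of _ S] conjI ballI)
      show "finite S" unfolding S_def by simp
      show "card S \<le> m" unfolding S_def using card_image_le[of "{1..m}"] by auto
      show "(\<lambda>(w,p). w \<ge> 0 \<and> p \<in> thresholds) x" if "x \<in> S" for x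
      proof -
        obtain i where i: "i \<in> {1..m}" "x = (w i, P i)" using \<open>x \<in> S\<close> S_def by auto
        have "0 \<le> (real i - 1/2) / m" "(real i - 1/2) / m \<le> 1"
          using i(1) assms(1) by (auto simp: divide_le_eq_1)
        hence "P i \<in> thresholds" unfolding thresholds_def P_def by auto
        moreover have "w i \<ge> 0" unfolding w_def by auto
        ultimately show ?thesis using i by simp
      qed
      fix b b' assume b: "b \<in> bids m v" and b': "b' \<in> bids m v"
      have "(\<Sum>(w,p)\<in>S. w * (util v b p - util v b' p))
          = (\<Sum>i\<in>{1..m}. w i * util v b (P i) - w i * util v b' (P i))"
        unfolding S_def sum.reindex[OF injP] by (simp add: right_diff_distrib)
      also have "\<dots> = b j - b' j" unfolding sum_subtractf key[OF b] key[OF b'] ..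
      finally show "gammaOB b j - gammaOB b' j = (\<Sum>(w,p)\<in>S. w * (util v b p - util v b' p))"
        by (simp add: gammaOB_def)
    qed
  qed
qed

end
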